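(* Write $P_{a/b}(u,v,w)=\sum_{k\ge0}S_k(v,w)u^k$. Then: (1) for every integer $n\ge1$, for $P_{1/n}$ one has $S_1(v,w)=\sum_{k=1}^{n}k\,v^{k-1}w^{n-k}$; (2) for every integer $n\ge2$, for $P_{2/(2n-1)}$ one has $S_1(v,w)=2n\,v^{2n-1}+\sum_{k=1}^{n-1}4k\,v^{n+k-1}w^{n-k}$. Equivalently, in terms of the Markov polynomials, the coefficient polynomial $S_1(y^2,z^2)$ multiplies $x^{3-a}/(y^{b-1}z^{a+b-1})$ in the expansion of $M_{a/b}$ in powers of $x$.
   Context: Markov polynomials. Let $x,y,z$ be indeterminates. Consider the set consisting of all rationals $\rho\in[0,1]$, each written in lowest terms $\rho=a/b$ with integers $a\ge 0$, $b\ge 1$, together with the formal symbol $1/0$. Define Laurent polynomials $M_\rho(x,y,z)$ recursively by $M_{1/0}=y$, $M_{0/1}=x$, $M_{1/1}=\frac{x^2+y^2}{z}$, and: whenever $a/b$, $c/d$ are in this set with $|ad-bc|=1$ and $(a+2c)/(b+2d)\in[0,1]$, then $M_{\frac{a+2c}{b+2d}}=\big(M_{c/d}^2+M_{\frac{a+c}{b+d}}^2\big)/M_{a/b}$. This determines $M_\rho$ for every rational $\rho\in[0,1]$. Numerator. For coprime $1\le a\le b$, $P_{a/b}(u,v,w)$ denotes the homogeneous polynomial of degree $a+b-1$ such that $M_{a/b}(x,y,z)=P_{a/b}(x^2,y^2,z^2)/(x^{a-1}y^{b-1}z^{a+b-1})$; its existence is known. *)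

theory Defs
  imports "HOL-Computational_Algebra.Polynomial"
begin

text \<open>Index set: rationals a/b in [0,1] in lowest terms (b \<ge> 1), together with 1/0.
  A pair (a,b) of naturals represents a/b.\<close>
definition markov_idx :: "nat \<Rightarrow> nat \<Rightarrow> bool" where
  "markov_idx a b \<longleftrightarrow> coprime a b \<and> (a \<le> b \<or> b = 0)"

text \<open>A family of Markov polynomials, viewed as functions of positive reals x,y,z
  (a Laurent polynomial is determined by its values there).  M a b x y z = M_{a/b}(x,y,z).\<close>
definition is_markov_family :: "(nat \<Rightarrow> nat \<Rightarrow> real \<Rightarrow> real \<Rightarrow> real \<Rightarrow> real) \<Rightarrow> bool" where
  "is_markov_family M \<longleftrightarrow>
     (\<forall>x y z. x > 0 \<longrightarrow> y > 0 \<longrightarrow> z > 0 \<longrightarrow>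
        M 1 0 x y z = y \<and> M 0 1 x y z = x \<and> M 1 1 x y z = (x^2 + y^2) / z) \<and>
     (\<forall>a b c d. markov_idx a b \<longrightarrow> markov_idx c d \<longrightarrow>
        \<bar>int a * int d - int b * int c\<bar> = 1 \<longrightarrow>
        a + 2*c \<le> b + 2*d \<longrightarrow>
        (\<forall>x y z. x > 0 \<longrightarrow> y > 0 \<longrightarrow> z > 0 \<longrightarrow>
           M (a + 2*c) (b + 2*d) x y z =
             ((M c d x y z)^2 + (M (a + c) (b + d) x y z)^2) / M a b x y z))"

text \<open>Trivariate polynomials as nested univariate polynomials:
  outer variable u, middle variable v, inner variable w.\<close>
definition eval3 :: "real poly poly poly \<Rightarrow> real \<Rightarrow> real \<Rightarrow> real \<Rightarrow> real" where
  "eval3 P u v w = poly (map_poly (\<lambda>q. poly (map_poly (\<lambda>r. poly r w) q) v) P) u"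

definition is_numerator ::
  "(nat \<Rightarrow> nat \<Rightarrow> real \<Rightarrow> real \<Rightarrow> real \<Rightarrow> real) \<Rightarrow> nat \<Rightarrow> nat \<Rightarrow> real poly poly poly \<Rightarrow> bool" where
  "is_numerator M a b P \<longleftrightarrow>
     (\<forall>x y z. x > 0 \<longrightarrow> y > 0 \<longrightarrow> z > 0 \<longrightarrow>
        M a b x y z = eval3 P (x^2) (y^2) (z^2) / (x^(a-1) * y^(b-1) * z^(a+b-1)))"

end

theory Submission
  imports Defs
begin

lemma ev2_alt: "poly (map_poly (\<lambda>r. poly r w) q) v = poly (poly q [:v:]) (w::real)"
  by (induction q) (simp_all add: map_poly_pCons)

lemma eval3_alt: "eval3 P u v w = poly (poly (poly P [:[:u:]:]) [:v:]) w"
  unfolding eval3_def ev2_alt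
proof (induction P)
  case 0 then show ?case by simp
next
  case (pCons a p)
  have f0: "(\<lambda>q. poly (poly q [:v:]) w) 0 = 0" by simp
  show ?case using pCons by (simp add: map_poly_pCons[of "\<lambda>q. poly (poly q [:v:]) w", OF f0])
qed

lemma poly_pos_zero: "(\<And>x. x > 0 \<Longrightarrow> poly p (x::real) = 0) \<Longrightarrow> p = 0"
proof (rule ccontr)
  assume h: "\<And>x. x > 0 \<Longrightarrow> poly p (x::real) = 0" and "p \<noteq> 0"
  have "{0<..} \<subseteq> {x. poly p x = 0}" using h by auto
  then have "finite {0::real<..}" using poly_roots_finite[OF \<open>p \<noteq> 0\<close>] finite_subset by blast
  then show False using infinite_Ioi by blast
qed

lemma eval3_zero:
  assumes "\<And>u v w. u > 0 \<Longrightarrow> v > 0 \<Longrightarrow> w > 0 \<Longrightarrow> eval3 P u v w = 0"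
  shows "P = 0"
proof -
  have c: "poly (map_poly (\<lambda>r. poly r w) (coeff P i)) v = 0" if "v > 0" "w > 0" for i v w
  proof -
    have "map_poly (\<lambda>q. poly (map_poly (\<lambda>r. poly r w) q) v) P = 0"
      using assms that unfolding eval3_def by (intro poly_pos_zero) auto
    then have "coeff (map_poly (\<lambda>q. poly (map_poly (\<lambda>r. poly r w) q) v) P) i = 0" by simp
    then show ?thesis by (simp add: coeff_map_poly)
  qed
  have "coeff (coeff P i) j = 0" for i j
  proof -
    have "map_poly (\<lambda>r. poly r w) (coeff P i) = 0" if "w > 0" for w
      using c that by (intro poly_pos_zero) auto
    then have "poly (coeff (coeff P i) j) w = 0" if "w > 0" for w
      using that by (metis coeff_0 coeff_map_poly poly_0)
    then have "coeff (coeff P i) j = 0" by (intro poly_pos_zero) auto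
    then show ?thesis .
  qed
  then show ?thesis by (metis leading_coeff_0_iff coeff_0 poly_eqI)
qed

lemma eval3_unique:
  assumes "\<And>u v w. u > 0 \<Longrightarrow> v > 0 \<Longrightarrow> w > 0 \<Longrightarrow> eval3 P u v w = eval3 Q u v w"
  shows "P = Q"
proof -
  have "P - Q = 0" using assms by (intro eval3_zero) (simp add: eval3_alt)
  then show ?thesis by simp
qed

definition VV :: "real poly poly" where "VV = monom 1 1"
definition WW :: "real poly poly" where "WW = monom (monom 1 1) 0"

fun Q :: "nat \<Rightarrow> real poly poly poly" where
  "Q 0 = 1"
| "Q (Suc 0) = pCons VV 1"
| "Q (Suc (Suc n)) = pCons 0 (Q (Suc n)) + smult (VV + WW) (Q (Suc n)) - smult (VV * WW) (Q n)"

definition TT :: "nat \<Rightarrow> real poly poly" where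
  "TT n = (\<Sum>k=1..n. monom (monom (of_nat k) (n - k)) (k - 1))"

lemma VV_pow: "VV ^ n = monom 1 n"
  by (simp add: VV_def monom_power)

lemma WW_monom: "WW * monom (monom c a) b = monom (monom c (Suc a)) b"
  by (simp add: WW_def mult_monom)

lemma monom_nat: "monom (monom (of_nat k) 0) n = (of_nat k :: real poly poly) * VV ^ n"
  by (simp add: VV_pow of_nat_poly mult_monom monom_0 flip: monom_0)

lemma TT_Suc: "TT (Suc n) = WW * TT n + of_nat (Suc n) * VV ^ n"
proof -
  have "TT (Suc n) = (\<Sum>k=1..n. monom (monom (of_nat k) (Suc n - k)) (k - 1))
           + monom (monom (of_nat (Suc n)) 0) n"
    unfolding TT_def by simp
  also have "(\<Sum>k=1..n. monom (monom (of_nat k) (Suc n - k)) (k - 1)) = WW * TT n"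
    unfolding TT_def sum_distrib_left
    by (rule sum.cong) (auto simp: WW_monom Suc_diff_le)
  finally show ?thesis by (simp only: monom_nat)
qed

lemma coeff_mult_1: "coeff (p * q) 1 = coeff p 0 * coeff q 1 + coeff p 1 * coeff q 0"
  by (simp add: coeff_mult)

lemma coeffQ: "coeff (Q n) 0 = VV ^ n \<and> coeff (Q n) 1 = TT n
             \<and> coeff (Q (Suc n)) 0 = VV ^ Suc n \<and> coeff (Q (Suc n)) 1 = TT (Suc n)"
proof (induction n)
  case 0
  then show ?case by (simp add: TT_def)
next
  case (Suc n)
  then have a: "coeff (Q n) 0 = VV ^ n" "coeff (Q n) 1 = TT n"
    "coeff (Q (Suc n)) 0 = VV ^ Suc n" "coeff (Q (Suc n)) 1 = TT (Suc n)" by auto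
  have t1: "TT (Suc n) = WW * TT n + of_nat (Suc n) * VV ^ n" by (rule TT_Suc)
  have t2: "TT (Suc (Suc n)) = WW * TT (Suc n) + of_nat (Suc (Suc n)) * VV ^ Suc n" by (rule TT_Suc)
  have "coeff (Q (Suc (Suc n))) 0 = VV ^ Suc (Suc n)"
    using a by (simp add: algebra_simps)
  moreover have "coeff (Q (Suc (Suc n))) 1 = TT (Suc (Suc n))"
    using a by (simp add: t2 t1 algebra_simps)
  ultimately show ?case using a by simp
qed

lemma eQ0: "eval3 (Q 0) u v w = 1" by (simp add: eval3_alt)
lemma eQ1: "eval3 (Q (Suc 0)) u v w = u + v" by (simp add: eval3_alt VV_def poly_monom)
lemma eQ: "eval3 (Q (Suc (Suc n))) u v w = (u+v+w) * eval3 (Q (Suc n)) u v w - v*w*eval3 (Q n) u v w"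
  by (simp add: eval3_alt VV_def WW_def poly_monom algebra_simps)

lemma eD: "eval3 (Q (Suc (Suc n))) u v w * eval3 (Q n) u v w
         = u * v^n * w^(Suc n) + (eval3 (Q (Suc n)) u v w)^2"
proof (induction n)
  case 0
  then show ?case by (simp only: eQ eQ0 eQ1) (simp add: power2_eq_square algebra_simps)
next
  case (Suc n)
  define a where "a = eval3 (Q (Suc (Suc n))) u v w"
  define b where "b = eval3 (Q (Suc n)) u v w"
  define c where "c = eval3 (Q n) u v w"
  have r3: "eval3 (Q (Suc (Suc (Suc n)))) u v w = (u+v+w) * a - v*w*b"
    unfolding a_def b_def by (rule eQ)
  have r2: "a = (u+v+w) * b - v*w*c" unfolding a_def b_def c_def by (rule eQ)
  have ih: "a * c = u * v^n * w^(Suc n) + b^2" using Suc unfolding a_def b_def c_def .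
  have "((u+v+w) * a - v*w*b) * b - a^2 = v*w*(a*c - b^2)"
  proof -
    have "a^2 = a * ((u+v+w) * b - v*w*c)" using r2 by (simp add: power2_eq_square)
    then show ?thesis by (simp add: algebra_simps power2_eq_square)
  qed
  then have fin: "eval3 (Q (Suc (Suc (Suc n)))) u v w * b = u * v^(Suc n) * w^(Suc (Suc n)) + a^2"
    unfolding r3 using ih by (simp add: algebra_simps)
  show ?case using fin unfolding a_def b_def .
qed

lemma epos: assumes "u > 0" "v > 0" "w > 0" shows "eval3 (Q n) u v w > 0"
proof -
  have "eval3 (Q n) u v w > 0 \<and> eval3 (Q (Suc n)) u v w > 0"
  proof (induction n)
    case 0 then show ?case using assms by (simp only: eQ0 eQ1) simp
  next
    case (Suc n)
    then have p: "eval3 (Q n) u v w > 0" "eval3 (Q (Suc n)) u v w > 0" by auto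
    have "u * v^n * w^(Suc n) + (eval3 (Q (Suc n)) u v w)^2 > 0"
      using assms p by (intro add_pos_pos) auto
    then have "eval3 (Q (Suc (Suc n))) u v w * eval3 (Q n) u v w > 0" by (simp only: eD)
    then have "eval3 (Q (Suc (Suc n))) u v w > 0" using p(1) by (simp add: zero_less_mult_iff)
    then show ?case using p by simp
  qed
  then show ?thesis by simp
qed

lemma rec:
  assumes "is_markov_family M" "markov_idx a b" "markov_idx c d"
    "\<bar>int a * int d - int b * int c\<bar> = 1" "a + 2*c \<le> b + 2*d" "x > 0" "y > 0" "z > 0"
  shows "M (a + 2*c) (b + 2*d) x y z = ((M c d x y z)^2 + (M (a + c) (b + d) x y z)^2) / M a b x y z"
  using assms unfolding is_markov_family_def by blast

lemma alg_step:
  fixes x y z A B e1 e2 e3 :: real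
  assumes "y > 0" "z > 0" "A > 0" "B > 0" "e1 > 0"
    "e3 * e1 = x^2 * y^2 * A^2 * z^2 * B^2 + e2^2"
  shows "(x^2 + (e2 / (y * A * (z * B)))^2) / (e1 / (A * B)) = e3 / (y^2 * A * (z^2 * B))"
proof -
  have D: "(y * A * (z * B))^2 > 0" using assms by simp
  have "x^2 + (e2 / (y * A * (z * B)))^2 = (x^2 * (y * A * (z * B))^2 + e2^2) / (y * A * (z * B))^2"
    using D by (simp add: add_divide_distrib power_divide)
  also have "x^2 * (y * A * (z * B))^2 + e2^2 = e3 * e1"
    using assms(6) by (simp add: power_mult_distrib mult_ac)
  finally have "x^2 + (e2 / (y * A * (z * B)))^2 = e3 * e1 / (y * A * (z * B))^2" .
  then show ?thesis using assms by (simp add: field_simps power2_eq_square)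
qed

lemma M1:
  assumes mf: "is_markov_family M" and pos: "x > 0" "y > 0" "z > 0"
  shows "M 1 (Suc n) x y z = eval3 (Q (Suc n)) (x^2) (y^2) (z^2) / (y^n * z^(Suc n))"
proof -
  let ?E = "\<lambda>n. eval3 (Q n) (x^2) (y^2) (z^2)"
  have Epos: "?E n > 0" for n using pos by (intro epos) auto
  have base: "M 1 1 x y z = (x^2 + y^2) / z" using mf pos unfolding is_markov_family_def by blast
  have "M 1 (Suc n) x y z = ?E (Suc n) / (y^n * z^(Suc n)) \<and>
        M 1 (Suc (Suc n)) x y z = ?E (Suc (Suc n)) / (y^(Suc n) * z^(Suc (Suc n)))"
  proof (induction n)
    case 0
    have r: "M (1 + 2*0) (0 + 2*1) x y z = ((M 0 1 x y z)^2 + (M (1+0) (0+1) x y z)^2) / M 1 0 x y z"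
      by (rule rec[OF mf]) (auto simp: markov_idx_def pos)
    have m01: "M 0 1 x y z = x" "M 1 0 x y z = y" using mf pos unfolding is_markov_family_def by blast+
    have "M 1 2 x y z = (x^2 + ((x^2 + y^2) / z)^2) / y" using r m01 base by (simp add: numeral_2_eq_2)
    also have "\<dots> = ?E 2 / (y * z^2)"
      using pos by (simp only: numeral_2_eq_2 eQ eQ1 eQ0) (simp add: field_simps power2_eq_square)
    finally show ?case using base by (simp only: eQ1 numeral_2_eq_2) simp
  next
    case (Suc n)
    then have h1: "M 1 (Suc n) x y z = ?E (Suc n) / (y^n * z^(Suc n))"
      and h2: "M 1 (Suc (Suc n)) x y z = ?E (Suc (Suc n)) / (y^(Suc n) * z^(Suc (Suc n)))" by auto
    have r: "M (1 + 2*0) (Suc n + 2*1) x y z = ((M 0 1 x y z)^2 + (M (1+0) (Suc n+1) x y z)^2) / M 1 (Suc n) x y z"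
      by (rule rec[OF mf]) (auto simp: markov_idx_def pos)
    have m01: "M 0 1 x y z = x" using mf pos unfolding is_markov_family_def by blast
    have r': "M 1 (Suc (Suc (Suc n))) x y z = (x^2 + (M 1 (Suc (Suc n)) x y z)^2) / M 1 (Suc n) x y z"
      using r m01 by simp
    have d: "?E (Suc (Suc (Suc n))) * ?E (Suc n) = x^2 * (y^2)^(Suc n) * (z^2)^(Suc (Suc n)) + (?E (Suc (Suc n)))^2"
      by (rule eD)
    have d': "?E (Suc (Suc (Suc n))) * ?E (Suc n) = x^2 * y^2 * (y^n)^2 * z^2 * (z^(Suc n))^2 + (?E (Suc (Suc n)))^2"
      using d by (simp add: power_mult_distrib power_mult[symmetric] mult_ac power2_eq_square power_add)
    have "M 1 (Suc (Suc (Suc n))) x y z = ?E (Suc (Suc (Suc n))) / (y^2 * y^n * (z^2 * z^(Suc n)))"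
      unfolding r' h1 h2
      using alg_step[OF pos(2,3) _ _ Epos d'] pos by (simp add: mult_ac power2_eq_square)
    then show ?case using h2 by (simp add: power2_eq_square mult_ac)
  qed
  then show ?thesis by simp
qed

lemma alg2:
  fixes x y z A B e1 e2 :: real
  assumes "x > 0" "y > 0" "z > 0" "A > 0" "B > 0"
  shows "((e1 / (A * B))^2 + (e2 / (y * A * (z * B)))^2) / x
       = (y^2 * z^2 * e1^2 + e2^2) / (x * (y^2 * A^2) * (z^2 * B^2))"
  using assms by (simp add: field_simps power2_eq_square)

definition R :: "nat \<Rightarrow> real poly poly poly" where
  "R m = smult (VV * WW) ((Q (Suc m))^2) + (Q (Suc (Suc m)))^2"

lemma eR: "eval3 (R m) u v w = v * w * (eval3 (Q (Suc m)) u v w)^2 + (eval3 (Q (Suc (Suc m))) u v w)^2"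
  unfolding R_def eval3_alt by (simp del: Q.simps add: VV_def WW_def poly_monom)

lemma coeffR: "coeff (R m) 1 = VV * WW * (2 * VV^(Suc m) * TT (Suc m))
                 + 2 * VV^(Suc (Suc m)) * TT (Suc (Suc m))"
  unfolding R_def using coeffQ[of "Suc m"] coeffQ[of m]
  by (simp only: coeff_add coeff_smult power2_eq_square coeff_mult_1) (simp del: Q.simps add: power2_eq_square coeff_mult_1 algebra_simps)

lemma sum_part2:
  "(\<Sum>k=1..Suc m. monom (monom (of_nat (4*k)) (Suc (Suc m) - k)) (Suc (Suc m) + k - 1))
     = of_nat 4 * VV^(Suc (Suc m)) * (WW * TT (Suc m))"
  unfolding TT_def sum_distrib_left
proof (rule sum.cong)
  fix k assume k: "k \<in> {1..Suc m}"
  have "of_nat 4 * VV ^ Suc (Suc m) * (WW * monom (monom (of_nat k) (Suc m - k)) (k - 1))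
      = monom (monom (of_nat 4) 0) 0 * (monom 1 (Suc (Suc m)) * monom (monom (of_nat k) (Suc (Suc m) - k)) (k - 1))"
    unfolding VV_pow using k by (simp add: monom_nat WW_monom Suc_diff_le del: of_nat_numeral)
  also have "\<dots> = monom (monom (of_nat (4*k)) (Suc (Suc m) - k)) (Suc (Suc m) + k - 1)"
    using k by (simp add: mult_monom)
  finally show "monom (monom (of_nat (4*k)) (Suc (Suc m) - k)) (Suc (Suc m) + k - 1)
      = of_nat 4 * VV ^ Suc (Suc m) * (WW * monom (monom (of_nat k) (Suc m - k)) (k - 1))" by simp
qed simp

lemma final_alg:
  "VV * WW * (2 * VV^(Suc m) * T1) + 2 * VV^(Suc (Suc m)) * (WW * T1 + of_nat (Suc (Suc m)) * VV^(Suc m))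
   = of_nat (2 * Suc (Suc m)) * VV^(2 * Suc (Suc m) - 1) + of_nat 4 * VV^(Suc (Suc m)) * (WW * T1)"
proof -
  have p: "VV^(2 * Suc (Suc m) - 1) = VV^(Suc (Suc m)) * VV^(Suc m)"
    by (simp add: power_add[symmetric] mult_2)
  show ?thesis unfolding p by (simp add: algebra_simps)
qed

theorem theorem4p3:
  fixes M :: "nat \<Rightarrow> nat \<Rightarrow> real \<Rightarrow> real \<Rightarrow> real \<Rightarrow> real"
  assumes "is_markov_family M"
  shows "(\<forall>n::nat. \<forall>P. n \<ge> 1 \<longrightarrow> is_numerator M 1 n P \<longrightarrow>
            coeff P 1 = (\<Sum>k=1..n. monom (monom (of_nat k) (n - k)) (k - 1)))
       \<and> (\<forall>n::nat. \<forall>P. n \<ge> 2 \<longrightarrow> is_numerator M 2 (2*n - 1) P \<longrightarrow>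
            coeff P 1 = monom [:of_nat (2*n):] (2*n - 1)
                        + (\<Sum>k=1..n-1. monom (monom (of_nat (4*k)) (n - k)) (n + k - 1)))"
proof (intro conjI allI impI)
  fix n :: nat and P
  assume n: "n \<ge> 1" and num: "is_numerator M 1 n P"
  obtain m where nm: "n = Suc m" using n by (cases n) auto
  have "P = Q (Suc m)"
  proof (rule eval3_unique)
    fix u v w :: real assume uvw: "u > 0" "v > 0" "w > 0"
    define x where "x = sqrt u"
    define y where "y = sqrt v"
    define z where "z = sqrt w"
    have pos: "x > 0" "y > 0" "z > 0" using uvw by (auto simp: x_def y_def z_def)
    have sq: "x^2 = u" "y^2 = v" "z^2 = w" using uvw by (auto simp: x_def y_def z_def)
    have a: "M 1 (Suc m) x y z = eval3 P (x^2) (y^2) (z^2) / (y^m * z^(Suc m))"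
      using num pos unfolding is_numerator_def nm by simp
    have b: "M 1 (Suc m) x y z = eval3 (Q (Suc m)) (x^2) (y^2) (z^2) / (y^m * z^(Suc m))"
      by (rule M1[OF assms pos])
    have "y^m * z^(Suc m) > 0" using pos by simp
    then have "eval3 P (x^2) (y^2) (z^2) = eval3 (Q (Suc m)) (x^2) (y^2) (z^2)"
      using a b pos by (simp add: divide_cancel_right)
    then show "eval3 P u v w = eval3 (Q (Suc m)) u v w" using sq by simp
  qed
  then show "coeff P 1 = (\<Sum>k=1..n. monom (monom (of_nat k) (n - k)) (k - 1))"
    using coeffQ[of "Suc m"] nm by (simp del: Q.simps add: TT_def)
next
  fix n :: nat and P
  assume n: "n \<ge> 2" and num: "is_numerator M 2 (2*n - 1) P"
  obtain m where nm: "n = Suc (Suc m)" using n by (metis add_2_eq_Suc le_Suc_ex)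
  have "P = R m"
  proof (rule eval3_unique)
    fix u v w :: real assume uvw: "u > 0" "v > 0" "w > 0"
    define x where "x = sqrt u"
    define y where "y = sqrt v"
    define z where "z = sqrt w"
    have pos: "x > 0" "y > 0" "z > 0" using uvw by (auto simp: x_def y_def z_def)
    have sq: "x^2 = u" "y^2 = v" "z^2 = w" using uvw by (auto simp: x_def y_def z_def)
    let ?E = "\<lambda>n. eval3 (Q n) (x^2) (y^2) (z^2)"
    have r: "M (0 + 2*1) (1 + 2*Suc m) x y z = ((M 1 (Suc m) x y z)^2 + (M (0+1) (1 + Suc m) x y z)^2) / M 0 1 x y z"
      by (rule rec[OF assms]) (auto simp: markov_idx_def pos)
    have m01: "M 0 1 x y z = x" using assms pos unfolding is_markov_family_def by blast
    have h1: "M 1 (Suc m) x y z = ?E (Suc m) / (y^m * z^(Suc m))" by (rule M1[OF assms pos])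
    have h2: "M 1 (Suc (Suc m)) x y z = ?E (Suc (Suc m)) / (y^(Suc m) * z^(Suc (Suc m)))" by (rule M1[OF assms pos])
    have "M 2 (2*n - 1) x y z = ((?E (Suc m) / (y^m * z^(Suc m)))^2 + (?E (Suc (Suc m)) / (y * y^m * (z * z^(Suc m))))^2) / x"
      using r m01 h1 h2 nm by (simp del: Q.simps add: mult_ac numeral_2_eq_2)
    also have "\<dots> = (y^2 * z^2 * (?E (Suc m))^2 + (?E (Suc (Suc m)))^2) / (x * (y^2 * (y^m)^2) * (z^2 * (z^(Suc m))^2))"
      by (rule alg2) (use pos in auto)
    also have "\<dots> = eval3 (R m) (x^2) (y^2) (z^2) / (x^(2-1) * y^(2*n-1-1) * z^(2+(2*n-1)-1))"
    proof -
      have e1: "x * (y^2 * (y^m)^2) * (z^2 * (z^(Suc m))^2) = x^(2-1) * y^(2*n-1-1) * z^(2+(2*n-1)-1)"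
      proof -
        have i1: "2*n-1-1 = Suc (Suc (m+m))" "2+(2*n-1)-1 = Suc (Suc (Suc (Suc (m+m))))" "2 - 1 = (1::nat)"
          unfolding nm by simp_all
        show ?thesis unfolding i1 by (simp add: power2_eq_square mult_ac power_add)
      qed
      show ?thesis unfolding e1 eR by simp
    qed
    finally have a: "M 2 (2*n - 1) x y z = eval3 (R m) (x^2) (y^2) (z^2) / (x^(2-1) * y^(2*n-1-1) * z^(2+(2*n-1)-1))" .
    have b: "M 2 (2*n - 1) x y z = eval3 P (x^2) (y^2) (z^2) / (x^(2-1) * y^(2*n-1-1) * z^(2+(2*n-1)-1))"
      using num pos unfolding is_numerator_def by blast
    have "x^(2-1) * y^(2*n-1-1) * z^(2+(2*n-1)-1) > 0" using pos by simp
    then have "eval3 P (x^2) (y^2) (z^2) = eval3 (R m) (x^2) (y^2) (z^2)"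
      using a b pos by (simp add: divide_cancel_right)
    then show "eval3 P u v w = eval3 (R m) u v w" using sq by simp
  qed
  then have "coeff P 1 = VV * WW * (2 * VV^(Suc m) * TT (Suc m))
                 + 2 * VV^(Suc (Suc m)) * (WW * TT (Suc m) + of_nat (Suc (Suc m)) * VV^(Suc m))"
    using coeffR[of m] TT_Suc[of "Suc m"] by simp
  also have "\<dots> = of_nat (2 * Suc (Suc m)) * VV^(2 * Suc (Suc m) - 1) + of_nat 4 * VV^(Suc (Suc m)) * (WW * TT (Suc m))"
    by (rule final_alg)
  also have "\<dots> = monom [:of_nat (2*n):] (2*n - 1)
                        + (\<Sum>k=1..n-1. monom (monom (of_nat (4*k)) (n - k)) (n + k - 1))"
    unfolding nm sum_part2 diff_Suc_1 by (simp only: monom_0[symmetric] monom_nat)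
  finally show "coeff P 1 = monom [:of_nat (2*n):] (2*n - 1)
                        + (\<Sum>k=1..n-1. monom (monom (of_nat (4*k)) (n - k)) (n + k - 1))" .
qed

end
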